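(* Let $W=x_1^{a_1}+\dots+x_N^{a_N}$ with all $a_i\ge3$, and let $X$ be a correlator of type $X_{-1}$ (in the A- or B-model). Then there is a unique $j\in\{1,\dots,N\}$ such that $K_j=1$ and $\ell_j\ge2$, while $K_i=\ell_i=0$ for all $i\ne j$. Furthermore $X=\langle x_j,x_j,x_j^{a_j-2}\alpha,x_j^{a_j-2}\beta\rangle$ for some monomials $\alpha,\beta$ not involving $x_j$.
   Context: A genus-zero correlator (Saito–Givental B-model of $W^T$, or FJRW A-model of $(W,G_W)$ with insertions mapped by Krawitz's isomorphism $\Psi$) is of type $X_{-1}$ if it has at least four insertions and has the form $\langle x_N,\dots,x_N,\dots,x_1,\dots,x_1,\alpha,\beta\rangle$ with $x_i$ appearing $\ell_i\ge0$ times and $\alpha=\prod x_i^{m_i},\beta=\prod x_i^{n_i}$ monomials in the standard basis of $\mathrm{Jac}(W^T)$, and if, setting $b=E_W^{-1}(\ell+m+n+2\cdot\mathbf 1)$ and $K_i=\ell_i-b_i+1$, one has $K_i\in\mathbb Z$ for all $i$ and $\sum_iK_i=1$. For the Fermat sum $W=W^T$, the standard basis consists of $\prod x_i^{r_i}$ with $0\le r_i\le a_i-2$, and $b_i=(\ell_i+m_i+n_i+2)/a_i$. *)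

theory Defs
  imports Main "HOL.Rat"
begin

text \<open>Fermat potential W = x_1^{a_1} + ... + x_N^{a_N}, variables indexed by {1..N}.
  A genus-zero correlator with insertions x_N (l_N times), ..., x_1 (l_1 times), alpha, beta
  is encoded by the exponent data (l, m, n): alpha = prod x_i^{m_i}, beta = prod x_i^{n_i}.\<close>

definition fermat_std_basis :: "nat \<Rightarrow> (nat \<Rightarrow> nat) \<Rightarrow> (nat \<Rightarrow> nat) \<Rightarrow> bool" where
  "fermat_std_basis N a r \<longleftrightarrow> (\<forall>i\<in>{1..N}. r i \<le> a i - 2)"

text \<open>b_i = (l_i + m_i + n_i + 2)/a_i  (this is E_W^{-1}(l+m+n+2) for the Fermat sum).\<close>
definition fermat_b :: "(nat \<Rightarrow> nat) \<Rightarrow> (nat \<Rightarrow> nat) \<Rightarrow> (nat \<Rightarrow> nat) \<Rightarrow> (nat \<Rightarrow> nat) \<Rightarrow> nat \<Rightarrow> rat" where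
  "fermat_b a l m n i = of_nat (l i + m i + n i + 2) / of_nat (a i)"

definition fermat_K :: "(nat \<Rightarrow> nat) \<Rightarrow> (nat \<Rightarrow> nat) \<Rightarrow> (nat \<Rightarrow> nat) \<Rightarrow> (nat \<Rightarrow> nat) \<Rightarrow> nat \<Rightarrow> rat" where
  "fermat_K a l m n i = of_nat (l i) - fermat_b a l m n i + 1"

definition type_Xm1 :: "nat \<Rightarrow> (nat \<Rightarrow> nat) \<Rightarrow> (nat \<Rightarrow> nat) \<Rightarrow> (nat \<Rightarrow> nat) \<Rightarrow> (nat \<Rightarrow> nat) \<Rightarrow> bool" where
  "type_Xm1 N a l m n \<longleftrightarrow>
     fermat_std_basis N a m \<and> fermat_std_basis N a n \<and>
     (\<Sum>i=1..N. l i) + 2 \<ge> 4 \<and>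
     (\<forall>i\<in>{1..N}. fermat_K a l m n i \<in> \<int>) \<and>
     (\<Sum>i=1..N. fermat_K a l m n i) = 1"

end

theory Submission
  imports Defs
begin

lemma aux_int:
  fixes a l m n c :: int
  assumes a: "a \<ge> 3" and l: "0 \<le> l" and m: "0 \<le> m" "m \<le> a - 2"
    and n: "0 \<le> n" "n \<le> a - 2" and e: "c * a = l + m + n + 2"
  shows "l + 1 - c \<ge> 0" "l + 1 - c = 0 \<Longrightarrow> l = 0"
    "l \<ge> 1 \<Longrightarrow> l + 1 - c \<ge> 1"
    "l + 1 - c = 1 \<Longrightarrow> l \<ge> 2 \<Longrightarrow> l = 2 \<and> m = a - 2 \<and> n = a - 2"
proof -
  show g: "l + 1 - c \<ge> 0"
  proof (rule ccontr)
    assume "\<not> ?thesis"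
    then have "c \<ge> l + 2" by simp
    then have "c * a \<ge> (l + 2) * a" using a by (intro mult_right_mono) auto
    moreover have "l * a \<ge> l * 3" using a l by (intro mult_left_mono) auto
    moreover have "(l + 2) * a = l * a + 2 * a" "c * a = a * c" by (simp_all add: algebra_simps)
    ultimately show False using e m n l by linarith
  qed
  show "l = 0" if "l + 1 - c = 0"
  proof -
    have "c = l + 1" using that by simp
    then have "(l + 1) * a = l + m + n + 2" using e by simp
    moreover have "l * a \<ge> l * 3" using a l by (intro mult_left_mono) auto
    moreover have "(l + 1) * a = l * a + a" by (simp add: algebra_simps)
    moreover have "l \<ge> 1 \<Longrightarrow> l * a - l - a + 1 \<ge> 0"
    proof -
      assume "l \<ge> 1"
      then have "(l - 1) * (a - 1) \<ge> 0" using a by simp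
      moreover have "(l - 1) * (a - 1) = l * a - l - a + 1" by (simp add: algebra_simps)
      ultimately show ?thesis by linarith
    qed
    ultimately show ?thesis using m n l by linarith
  qed
  show "l + 1 - c \<ge> 1" if "l \<ge> 1"
  proof (rule ccontr)
    assume "\<not> ?thesis"
    then have "c \<ge> l + 1" by simp
    then have "c * a \<ge> (l + 1) * a" using a by (intro mult_right_mono) auto
    moreover have "(l - 1) * a \<ge> (l - 1) * 3" using a that by (intro mult_left_mono) auto
    moreover have "(l + 1) * a = l * a + a" "(l - 1) * a = l * a - a"
       "(l - 1) * 3 = 3 * l - 3" by (simp_all add: algebra_simps)
    ultimately show False using e m n l that by linarith
  qed
  show "l = 2 \<and> m = a - 2 \<and> n = a - 2" if "l + 1 - c = 1" "l \<ge> 2"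
  proof -
    have "c = l" using that by simp
    then have E: "l * a = l + m + n + 2" using e by simp
    have "l \<le> 2"
    proof (rule ccontr)
      assume "\<not> l \<le> 2"
      then have "(l - 3) * a \<ge> (l - 3) * 3" using a by (intro mult_left_mono) auto
      moreover have "(l - 3) * a = l * a - 3 * a" "(l - 3) * 3 = 3 * l - 9" by (simp_all add: algebra_simps)
      ultimately show False using E m n a \<open>\<not> l \<le> 2\<close> by linarith
    qed
    then have "l = 2" using that by simp
    then show ?thesis using E m n by simp
  qed
qed

lemma per_index:
  assumes a: "a i \<ge> 3" and m: "m i \<le> a i - 2" and n: "n i \<le> a i - 2"
    and K: "fermat_K a l m n i \<in> \<int>"
  shows "\<exists>k::int. fermat_K a l m n i = of_int k \<and> k \<ge> 0 \<and> (k = 0 \<longrightarrow> l i = 0)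
     \<and> (l i \<ge> 1 \<longrightarrow> k \<ge> 1)
     \<and> (k = 1 \<longrightarrow> l i \<ge> 2 \<longrightarrow> l i = 2 \<and> m i = a i - 2 \<and> n i = a i - 2)"
proof -
  obtain k where k: "fermat_K a l m n i = of_int k" using K by (auto elim: Ints_cases)
  define c where "c = int (l i) + 1 - k"
  have "fermat_b a l m n i = of_int c" using k unfolding fermat_K_def c_def by simp
  then have "of_nat (l i + m i + n i + 2) = (of_int c :: rat) * of_nat (a i)"
    using a unfolding fermat_b_def by (simp add: divide_eq_eq)
  then have "(of_int (c * int (a i)) :: rat) = of_int (int (l i) + int (m i) + int (n i) + 2)"
    by simp
  then have e: "c * int (a i) = int (l i) + int (m i) + int (n i) + 2"
    using of_int_eq_iff by blast
  have kk: "k = int (l i) + 1 - c" using c_def by simp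
  note A = aux_int[of "int (a i)" "int (l i)" "int (m i)" "int (n i)" c]
  have h1: "int (a i) \<ge> 3" using a by simp
  have h2: "int (m i) \<le> int (a i) - 2" "int (n i) \<le> int (a i) - 2" using a m n by auto
  show ?thesis
    apply (rule exI[of _ k])
    using A[OF h1 _ _ h2(1) _ h2(2) e] kk k h2 a by auto
qed

theorem lemma4p6:
  fixes N :: nat and a l m n :: "nat \<Rightarrow> nat"
  assumes "\<forall>i\<in>{1..N}. a i \<ge> 3"
    and "type_Xm1 N a l m n"
  shows "(\<exists>!j. j \<in> {1..N} \<and> fermat_K a l m n j = 1 \<and> l j \<ge> 2)
       \<and> (\<exists>j\<in>{1..N}. fermat_K a l m n j = 1 \<and> l j \<ge> 2
            \<and> (\<forall>i\<in>{1..N}. i \<noteq> j \<longrightarrow> fermat_K a l m n i = 0 \<and> l i = 0)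
            \<and> l j = 2 \<and> m j = a j - 2 \<and> n j = a j - 2)"
proof -
  let ?K = "fermat_K a l m n"
  have T: "\<forall>i\<in>{1..N}. m i \<le> a i - 2" "\<forall>i\<in>{1..N}. n i \<le> a i - 2"
    "(\<Sum>i=1..N. l i) \<ge> 2" "\<forall>i\<in>{1..N}. ?K i \<in> \<int>" "(\<Sum>i=1..N. ?K i) = 1"
    using assms(2) unfolding type_Xm1_def fermat_std_basis_def by auto
  have P: "\<exists>k::int. ?K i = of_int k \<and> k \<ge> 0 \<and> (k = 0 \<longrightarrow> l i = 0)
     \<and> (l i \<ge> 1 \<longrightarrow> k \<ge> 1)
     \<and> (k = 1 \<longrightarrow> l i \<ge> 2 \<longrightarrow> l i = 2 \<and> m i = a i - 2 \<and> n i = a i - 2)"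
    if "i \<in> {1..N}" for i
    using per_index[of a i m n l] that assms(1) T by auto
  have nonneg: "?K i \<ge> 0" if "i \<in> {1..N}" for i using P[OF that] by auto
  have z: "l i = 0" if "i \<in> {1..N}" "?K i = 0" for i using P[OF that(1)] that(2) by auto
  have pos: "?K i \<ge> 1" if "i \<in> {1..N}" "l i \<ge> 1" for i using P[OF that(1)] that(2) by auto
  have fin: "?K i = 1 \<Longrightarrow> l i \<ge> 2 \<Longrightarrow> l i = 2 \<and> m i = a i - 2 \<and> n i = a i - 2"
    if "i \<in> {1..N}" for i using P[OF that] by auto
  obtain j where j: "j \<in> {1..N}" "l j \<ge> 1"
  proof (rule ccontr)
    assume "\<not> thesis"
    then have "\<forall>i\<in>{1..N}. l i = 0" using that by force
    then have "(\<Sum>i=1..N. l i) = 0" by simp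
    then show False using T(3) by simp
  qed
  have split: "(\<Sum>i=1..N. ?K i) = ?K j + (\<Sum>i\<in>{1..N}-{j}. ?K i)"
    using j(1) by (simp add: sum.remove)
  have rest: "(\<Sum>i\<in>{1..N}-{j}. ?K i) \<ge> 0" using nonneg by (intro sum_nonneg) auto
  have Kj: "?K j = 1" using split rest T(5) pos[OF j] by linarith
  have "(\<Sum>i\<in>{1..N}-{j}. ?K i) = 0" using split T(5) Kj by linarith
  then have others: "\<forall>i\<in>{1..N}. i \<noteq> j \<longrightarrow> ?K i = 0"
    using sum_nonneg_eq_0_iff[of "{1..N}-{j}" ?K] nonneg by auto
  then have lo: "\<forall>i\<in>{1..N}. i \<noteq> j \<longrightarrow> l i = 0" using z by blast
  have "(\<Sum>i=1..N. l i) = l j + (\<Sum>i\<in>{1..N}-{j}. l i)"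
    using j(1) by (simp add: sum.remove)
  also have "(\<Sum>i\<in>{1..N}-{j}. l i) = 0" using lo by simp
  finally have lj: "l j \<ge> 2" using T(3) by simp
  have F: "l j = 2 \<and> m j = a j - 2 \<and> n j = a j - 2" using fin[OF j(1) Kj lj] .
  have U: "\<exists>!j. j \<in> {1..N} \<and> ?K j = 1 \<and> l j \<ge> 2"
  proof (rule ex1I[of _ j])
    show "j \<in> {1..N} \<and> ?K j = 1 \<and> l j \<ge> 2" using j Kj lj by simp
  next
    fix y assume "y \<in> {1..N} \<and> ?K y = 1 \<and> l y \<ge> 2"
    then show "y = j" using lo by force
  qed
  show ?thesis using U j(1) Kj lj others lo F by blast
qed

end
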